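(* Let $B$ be a unital $C^*$-algebra with a $*$-isomorphism $\psi:B\to M_n\otimes B$ satisfying $\psi(1)=I_n\otimes1$, let $m\ge1$, and suppose that $A$ is a maximal abelian $*$-subalgebra of $B$ with $\sigma_m(A)\subset A$. Then $\chi_{mij}(A)\subset A$ for all $1\le i,j\le n$.
   Context: $M_n=M_n(\mathbb{C})$, matrix units $E_{kl}$, identity $I_n$. Define $\psi_0=\mathrm{id}_B$, $\psi_{m+1}=(\mathrm{id}^{\otimes m}\otimes\psi)\circ\psi_m:B\to M_n^{\otimes(m+1)}\otimes B$. With $f(b)=I_n\otimes b$, for $m\ge1$ let $\sigma_m=\psi_m^{-1}\circ(\mathrm{id}^{\otimes(m-1)}\otimes f)\circ\psi_{m-1}:B\to B$. Let $e_{ij}:M_n\to\mathbb{C}$ be the linear functional $e_{ij}(E_{kl})=\delta_{ik}\delta_{jl}$, and for $m\ge1$ let $\chi_{mij}=\psi_{m-1}^{-1}\circ(\mathrm{id}^{\otimes(m-1)}\otimes e_{ij}\otimes\mathrm{id}_B)\circ\psi_m:B\to B$ (slice map on the $m$-th tensor factor). *)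

theory Defs
  imports Complex_Main
begin

class cstar_algebra = real_normed_algebra_1 + banach +
  fixes scaleC :: "complex \<Rightarrow> 'a \<Rightarrow> 'a"
    and cstar :: "'a \<Rightarrow> 'a"
  assumes scaleC_add_right: "scaleC c (x + y) = scaleC c x + scaleC c y"
    and scaleC_add_left: "scaleC (c + d) x = scaleC c x + scaleC d x"
    and scaleC_scaleC: "scaleC c (scaleC d x) = scaleC (c * d) x"
    and scaleC_one: "scaleC 1 x = x"
    and scaleR_scaleC: "scaleR r x = scaleC (complex_of_real r) x"
    and norm_scaleC: "norm (scaleC c x) = cmod c * norm x"
    and mult_scaleC_left: "scaleC c x * y = scaleC c (x * y)"
    and mult_scaleC_right: "x * scaleC c y = scaleC c (x * y)"
    and cstar_cstar: "cstar (cstar x) = x"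
    and cstar_add: "cstar (x + y) = cstar x + cstar y"
    and cstar_scaleC: "cstar (scaleC c x) = scaleC (cnj c) (cstar x)"
    and cstar_mult: "cstar (x * y) = cstar y * cstar x"
    and cstar_identity: "norm (cstar x * x) = (norm x)\<^sup>2"

text \<open>An element of M_n \<otimes> B is represented as a function X :: nat => nat => 'b,
  with X i j the B-coefficient of E_ij (indices 1..n), zero outside 1..n.\<close>

definition Mn_carrier :: "nat \<Rightarrow> (nat \<Rightarrow> nat \<Rightarrow> 'b::zero) set" where
  "Mn_carrier n = {X. \<forall>i j. (i \<notin> {1..n} \<or> j \<notin> {1..n}) \<longrightarrow> X i j = 0}"

definition Mn_unit :: "nat \<Rightarrow> nat \<Rightarrow> nat \<Rightarrow> 'b::{zero,one}" where
  "Mn_unit n = (\<lambda>i j. if i = j \<and> i \<in> {1..n} then 1 else 0)"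

definition star_iso_Mn :: "nat \<Rightarrow> ('b::cstar_algebra \<Rightarrow> nat \<Rightarrow> nat \<Rightarrow> 'b) \<Rightarrow> bool" where
  "star_iso_Mn n \<psi> \<longleftrightarrow>
     inj \<psi> \<and> range \<psi> = Mn_carrier n \<and>
     (\<forall>x y. \<psi> (x + y) = (\<lambda>i j. \<psi> x i j + \<psi> y i j)) \<and>
     (\<forall>c x. \<psi> (scaleC c x) = (\<lambda>i j. scaleC c (\<psi> x i j))) \<and>
     (\<forall>x y. \<psi> (x * y) = (\<lambda>i j. \<Sum>k\<in>{1..n}. \<psi> x i k * \<psi> y k j)) \<and>
     (\<forall>x. \<psi> (cstar x) = (\<lambda>i j. cstar (\<psi> x j i)))"

text \<open>An element of M_n^{\<otimes>m} \<otimes> B is a function of two index lists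
  ks = [k1,...,km], ls = [l1,...,lm]; its value is the B-coefficient of
  E_{k1 l1} \<otimes> ... \<otimes> E_{km lm} (zero for lists of wrong length).
  psi_0 = id, psi_{m+1} = (id^{\<otimes>m} \<otimes> psi) \<circ> psi_m: psi is applied in the last
  (B) slot, producing a new M_n factor at position m+1.\<close>

fun psi_iter :: "('b::zero \<Rightarrow> nat \<Rightarrow> nat \<Rightarrow> 'b) \<Rightarrow> nat \<Rightarrow> 'b \<Rightarrow> nat list \<Rightarrow> nat list \<Rightarrow> 'b" where
  "psi_iter \<psi> 0 b ks ls = (if ks = [] \<and> ls = [] then b else 0)"
| "psi_iter \<psi> (Suc m) b ks ls =
     (if ks \<noteq> [] \<and> ls \<noteq> []
      then \<psi> (psi_iter \<psi> m b (butlast ks) (butlast ls)) (last ks) (last ls)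
      else 0)"

text \<open>(id^{\<otimes>(m-1)} \<otimes> f) with f(b) = I_n \<otimes> b: inserts I_n as the last M_n factor.\<close>

definition ampl :: "nat \<Rightarrow> (nat list \<Rightarrow> nat list \<Rightarrow> 'b::zero) \<Rightarrow> nat list \<Rightarrow> nat list \<Rightarrow> 'b" where
  "ampl n Y = (\<lambda>ks ls. if ks \<noteq> [] \<and> ls \<noteq> [] \<and> last ks = last ls \<and> last ks \<in> {1..n}
                        then Y (butlast ks) (butlast ls) else 0)"

text \<open>Slice map id^{\<otimes>(m-1)} \<otimes> e_ij \<otimes> id_B on the m-th (= last) M_n factor.\<close>

definition slice :: "nat \<Rightarrow> nat \<Rightarrow> (nat list \<Rightarrow> nat list \<Rightarrow> 'b) \<Rightarrow> nat list \<Rightarrow> nat list \<Rightarrow> 'b" where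
  "slice i j X = (\<lambda>ks ls. X (ks @ [i]) (ls @ [j]))"

definition sigma :: "nat \<Rightarrow> ('b::zero \<Rightarrow> nat \<Rightarrow> nat \<Rightarrow> 'b) \<Rightarrow> nat \<Rightarrow> 'b \<Rightarrow> 'b" where
  "sigma n \<psi> m b = the_inv_into UNIV (psi_iter \<psi> m) (ampl n (psi_iter \<psi> (m - 1) b))"

definition chi :: "('b::zero \<Rightarrow> nat \<Rightarrow> nat \<Rightarrow> 'b) \<Rightarrow> nat \<Rightarrow> nat \<Rightarrow> nat \<Rightarrow> 'b \<Rightarrow> 'b" where
  "chi \<psi> m i j b = the_inv_into UNIV (psi_iter \<psi> (m - 1)) (slice i j (psi_iter \<psi> m b))"

definition star_subalgebra :: "'b::cstar_algebra set \<Rightarrow> bool" where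
  "star_subalgebra A \<longleftrightarrow> 0 \<in> A \<and>
     (\<forall>x\<in>A. \<forall>y\<in>A. x + y \<in> A \<and> x * y \<in> A) \<and>
     (\<forall>c. \<forall>x\<in>A. scaleC c x \<in> A) \<and> (\<forall>x\<in>A. cstar x \<in> A)"

definition abelian :: "'b::times set \<Rightarrow> bool" where
  "abelian A \<longleftrightarrow> (\<forall>x\<in>A. \<forall>y\<in>A. x * y = y * x)"

definition masa :: "'b::cstar_algebra set \<Rightarrow> bool" where
  "masa A \<longleftrightarrow> star_subalgebra A \<and> abelian A \<and>
     (\<forall>A'. star_subalgebra A' \<and> abelian A' \<and> A \<subseteq> A' \<longrightarrow> A' = A)"

end

theory Submission
  imports Defs
begin

definition Lst :: "nat \<Rightarrow> nat \<Rightarrow> nat list set" where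
  "Lst n m = {xs. set xs \<subseteq> {1..n} \<and> length xs = m}"

definition Car :: "nat \<Rightarrow> nat \<Rightarrow> (nat list \<Rightarrow> nat list \<Rightarrow> 'b::zero) set" where
  "Car n m = {X. \<forall>ks ls. (ks \<notin> Lst n m \<or> ls \<notin> Lst n m) \<longrightarrow> X ks ls = 0}"

lemma finite_Lst: "finite (Lst n m)"
  unfolding Lst_def by (rule finite_lists_length_eq) simp

lemma Lst_0: "Lst n 0 = {[]}"
  unfolding Lst_def by auto

lemma snoc_Lst: "(ks @ [k] \<in> Lst n (Suc m)) = (ks \<in> Lst n m \<and> k \<in> {1..n})"
  unfolding Lst_def by auto

lemma nil_notin_Lst: "[] \<notin> Lst n (Suc m)"
  unfolding Lst_def by auto

lemma Lst_Suc: "Lst n (Suc m) = (\<lambda>(qs,q). qs @ [q]) ` (Lst n m \<times> {1..n})"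
proof
  show "Lst n (Suc m) \<subseteq> (\<lambda>(qs,q). qs @ [q]) ` (Lst n m \<times> {1..n})"
  proof
    fix xs assume xs: "xs \<in> Lst n (Suc m)"
    then have "xs \<noteq> []" using nil_notin_Lst by auto
    then obtain qs q where e: "xs = qs @ [q]" by (metis rev_exhaust)
    with xs snoc_Lst show "xs \<in> (\<lambda>(qs,q). qs @ [q]) ` (Lst n m \<times> {1..n})" by force
  qed
qed (auto simp: snoc_Lst)

lemma sum_Lst_Suc:
  "(\<Sum>ps\<in>Lst n (Suc m). f ps) = (\<Sum>qs\<in>Lst n m. \<Sum>q\<in>{1..n}. f (qs @ [q]))"
proof -
  have inj: "inj_on (\<lambda>(qs,q). qs @ [q]) (Lst n m \<times> {1..n})"
    by (auto simp: inj_on_def)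
  show ?thesis
    unfolding Lst_Suc sum.reindex[OF inj] sum.cartesian_product by (simp add: case_prod_beta)
qed

section \<open>Commutants and masas\<close>

lemma scaleC_zero_left: "scaleC 0 (y::'a::cstar_algebra) = 0"
proof -
  have "scaleC (0+0) y = scaleC 0 y + scaleC 0 y" by (rule scaleC_add_left)
  then show ?thesis by simp
qed

lemma commutant_subalg:
  fixes S :: "'a::cstar_algebra set"
  assumes "\<forall>s\<in>S. cstar s \<in> S"
  shows "star_subalgebra {x. \<forall>s\<in>S. x * s = s * x}"
  unfolding star_subalgebra_def
proof (intro conjI ballI allI)
  show "0 \<in> {x. \<forall>s\<in>S. x * s = s * x}" by simp
next
  fix x y assume x: "x \<in> {x. \<forall>s\<in>S. x * s = s * x}" and y: "y \<in> {x. \<forall>s\<in>S. x * s = s * x}"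
  show "x + y \<in> {x. \<forall>s\<in>S. x * s = s * x}" using x y by (simp add: distrib_left distrib_right)
  show "x * y \<in> {x. \<forall>s\<in>S. x * s = s * x}" using x y by (simp add: mult.assoc) (metis mult.assoc)
next
  fix c x assume x: "x \<in> {x. \<forall>s\<in>S. x * s = s * x}"
  then show "scaleC c x \<in> {x. \<forall>s\<in>S. x * s = s * x}" by (simp add: mult_scaleC_left mult_scaleC_right)
next
  fix x assume x: "x \<in> {x. \<forall>s\<in>S. x * s = s * x}"
  have "cstar x * s = s * cstar x" if "s \<in> S" for s
  proof -
    have "x * cstar s = cstar s * x" using x assms that by auto
    then have "cstar (x * cstar s) = cstar (cstar s * x)" by simp
    then show ?thesis by (simp add: cstar_mult cstar_cstar)
  qed
  then show "cstar x \<in> {x. \<forall>s\<in>S. x * s = s * x}" by simp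
qed

lemma masa_selfadj:
  fixes A :: "'a::cstar_algebra set"
  assumes m: "masa A" and h: "cstar h = h" and c: "\<forall>a\<in>A. h * a = a * h"
  shows "h \<in> A"
proof -
  have sa: "star_subalgebra A" and ab: "abelian A" using m by (auto simp: masa_def)
  define S where "S = insert h A"
  have Sadj: "\<forall>s\<in>S. cstar s \<in> S" using sa h by (auto simp: S_def star_subalgebra_def)
  have Scomm: "\<forall>s\<in>S. \<forall>t\<in>S. s * t = t * s" using ab c by (auto simp: S_def abelian_def)
  define C where "C = {x. \<forall>s\<in>S. x * s = s * x}"
  have Csub: "star_subalgebra C" unfolding C_def by (rule commutant_subalg[OF Sadj])
  have Cadj: "\<forall>s\<in>C. cstar s \<in> C" using Csub by (simp add: star_subalgebra_def)
  define D where "D = {x. \<forall>s\<in>C. x * s = s * x}"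
  have Dsub: "star_subalgebra D" unfolding D_def by (rule commutant_subalg[OF Cadj])
  have SC: "S \<subseteq> C" using Scomm by (auto simp: C_def)
  have SD: "S \<subseteq> D" unfolding D_def C_def by auto
  have DC: "D \<subseteq> C" using SC unfolding D_def C_def by auto
  have Dab: "abelian D" using DC unfolding abelian_def D_def by auto
  have "A \<subseteq> D" using SD by (auto simp: S_def)
  then have "D = A" using m Dsub Dab by (auto simp: masa_def)
  then show ?thesis using SD by (auto simp: S_def)
qed

lemma masa_commutant:
  fixes A :: "'a::cstar_algebra set"
  assumes m: "masa A" and c: "\<forall>a\<in>A. x * a = a * x"
  shows "x \<in> A"
proof -
  have sa: "star_subalgebra A" using m by (auto simp: masa_def)
  define C where "C = {x. \<forall>s\<in>A. x * s = s * x}"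
  have Csub: "star_subalgebra C" unfolding C_def
    by (rule commutant_subalg) (use sa in \<open>simp add: star_subalgebra_def\<close>)
  have xC: "x \<in> C" using c by (simp add: C_def)
  have xsC: "cstar x \<in> C" using Csub xC by (simp add: star_subalgebra_def)
  define h where "h = scaleC (1/2) x + scaleC (1/2) (cstar x)"
  define k where "k = scaleC (-\<i>/2) x + scaleC (\<i>/2) (cstar x)"
  have hC: "h \<in> C" using Csub xC xsC unfolding h_def star_subalgebra_def by blast
  have kC: "k \<in> C" using Csub xC xsC unfolding k_def star_subalgebra_def by blast
  have hs: "cstar h = h" unfolding h_def
    by (simp add: cstar_add cstar_scaleC cstar_cstar add.commute)
  have ks: "cstar k = k" unfolding k_def
    by (simp add: cstar_add cstar_scaleC cstar_cstar add.commute)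
  have hA: "h \<in> A" using masa_selfadj[OF m hs] hC by (simp add: C_def)
  have kA: "k \<in> A" using masa_selfadj[OF m ks] kC by (simp add: C_def)
  have "h + scaleC \<i> k = (scaleC (1/2) x + scaleC (1/2) x) + (scaleC (1/2) (cstar x) + scaleC (-1/2) (cstar x))"
    unfolding h_def k_def by (simp add: scaleC_add_right scaleC_scaleC algebra_simps)
  also have "\<dots> = x"
    by (simp add: scaleC_add_left[symmetric] scaleC_one scaleC_zero_left)
  finally have "x = h + scaleC \<i> k" by simp
  then show ?thesis using sa hA kA by (simp add: star_subalgebra_def)
qed


section \<open>Properties of psi and its iterates\<close>

lemma iso_add: "star_iso_Mn n \<psi> \<Longrightarrow> \<psi> (x + y) i j = \<psi> x i j + \<psi> y i j"
  unfolding star_iso_Mn_def by auto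

lemma iso_mult: "star_iso_Mn n \<psi> \<Longrightarrow> \<psi> (x * y) i j = (\<Sum>k\<in>{1..n}. \<psi> x i k * \<psi> y k j)"
  unfolding star_iso_Mn_def by auto

lemma iso_zero: "star_iso_Mn n \<psi> \<Longrightarrow> \<psi> 0 i j = 0"
  using iso_add[of n \<psi> 0 0 i j] by simp

lemma iso_zero': "star_iso_Mn n \<psi> \<Longrightarrow> \<psi> 0 = (\<lambda>i j. 0)"
  using iso_zero by blast

lemma iso_carrier: "star_iso_Mn n \<psi> \<Longrightarrow> i \<notin> {1..n} \<or> j \<notin> {1..n} \<Longrightarrow> \<psi> x i j = 0"
proof -
  assume a: "star_iso_Mn n \<psi>" "i \<notin> {1..n} \<or> j \<notin> {1..n}"
  have "\<psi> x \<in> Mn_carrier n" using a(1) unfolding star_iso_Mn_def by auto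
  then show ?thesis using a(2) unfolding Mn_carrier_def by auto
qed

lemma iso_sum: "star_iso_Mn n \<psi> \<Longrightarrow> \<psi> (sum f S) i j = (\<Sum>s\<in>S. \<psi> (f s) i j)"
proof (induction S rule: infinite_finite_induct)
  case (infinite A) then show ?case by (simp add: iso_zero)
next
  case empty then show ?case by (simp add: iso_zero)
next
  case (insert x F) then show ?case by (simp add: iso_add)
qed

lemma psi_iter_snoc: "psi_iter \<psi> (Suc m) b (ks @ [k]) (ls @ [l]) = \<psi> (psi_iter \<psi> m b ks ls) k l"
  by simp

lemma psi_iter_car:
  assumes iso: "star_iso_Mn n \<psi>"
  shows "psi_iter \<psi> m b \<in> Car n m"
proof (induction m)
  case 0 then show ?case by (auto simp: Car_def Lst_0)
next
  case (Suc m)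
  have "psi_iter \<psi> (Suc m) b ks ls = 0" if "ks \<notin> Lst n (Suc m) \<or> ls \<notin> Lst n (Suc m)" for ks ls
  proof (cases "ks = [] \<or> ls = []")
    case True then show ?thesis by auto
  next
    case False
    then obtain ks0 k ls0 l where e: "ks = ks0 @ [k]" "ls = ls0 @ [l]" by (metis rev_exhaust)
    show ?thesis
    proof (cases "ks0 \<in> Lst n m \<and> ls0 \<in> Lst n m")
      case True
      then have "k \<notin> {1..n} \<or> l \<notin> {1..n}" using that e snoc_Lst by auto
      then show ?thesis using e iso_carrier[OF iso] by simp
    next
      case False
      then have "psi_iter \<psi> m b ks0 ls0 = 0" using Suc by (auto simp: Car_def)
      then show ?thesis using e iso_zero[OF iso] by simp
    qed
  qed
  then show ?case by (auto simp: Car_def)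
qed

lemma psi_iter_surj:
  assumes iso: "star_iso_Mn n \<psi>"
  shows "X \<in> Car n m \<Longrightarrow> \<exists>b. psi_iter \<psi> m b = X"
proof (induction m arbitrary: X)
  case 0
  have "psi_iter \<psi> 0 (X [] []) = X"
  proof (intro ext)
    fix ks ls show "psi_iter \<psi> 0 (X [] []) ks ls = X ks ls"
      using 0 by (auto simp: Car_def Lst_0)
  qed
  then show ?case by blast
next
  case (Suc m)
  define M where "M = (\<lambda>ks ls. (\<lambda>k l. if k \<in> {1..n} \<and> l \<in> {1..n} then X (ks @ [k]) (ls @ [l]) else 0))"
  have Mr: "M ks ls \<in> range \<psi>" for ks ls
  proof -
    have "M ks ls \<in> Mn_carrier n" by (auto simp: M_def Mn_carrier_def)
    then show ?thesis using iso unfolding star_iso_Mn_def by auto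
  qed
  define Z where "Z = (\<lambda>ks ls. if ks \<in> Lst n m \<and> ls \<in> Lst n m then inv \<psi> (M ks ls) else 0)"
  have "Z \<in> Car n m" by (auto simp: Z_def Car_def)
  then obtain b where b: "psi_iter \<psi> m b = Z" using Suc.IH by blast
  have "psi_iter \<psi> (Suc m) b ks ls = X ks ls" for ks ls
  proof (cases "ks = [] \<or> ls = []")
    case True then show ?thesis using Suc.prems nil_notin_Lst by (auto simp: Car_def)
  next
    case False
    then obtain ks0 k ls0 l where e: "ks = ks0 @ [k]" "ls = ls0 @ [l]" by (metis rev_exhaust)
    show ?thesis
    proof (cases "ks0 \<in> Lst n m \<and> ls0 \<in> Lst n m")
      case True
      then have "psi_iter \<psi> (Suc m) b ks ls = M ks0 ls0 k l"
        using e b Mr by (simp add: Z_def f_inv_into_f)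
      also have "\<dots> = X ks ls"
        using Suc.prems e True snoc_Lst by (auto simp: M_def Car_def)
      finally show ?thesis .
    next
      case False
      then have "psi_iter \<psi> (Suc m) b ks ls = 0" using e b iso_zero[OF iso] by (auto simp: Z_def)
      also have "\<dots> = X ks ls" using Suc.prems e False snoc_Lst by (auto simp: Car_def)
      finally show ?thesis .
    qed
  qed
  then show ?case by blast
qed

lemma psi_iter_inj:
  assumes iso: "star_iso_Mn n \<psi>"
  shows "inj (psi_iter \<psi> m)"
proof (induction m)
  case 0
  show ?case
  proof (rule injI)
    fix x y assume "psi_iter \<psi> 0 x = psi_iter \<psi> 0 (y::'a)"
    then have "psi_iter \<psi> 0 x [] [] = psi_iter \<psi> 0 y [] []" by simp
    then show "x = y" by simp
  qed
next
  case (Suc m)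
  show ?case
  proof (rule injI)
    fix x y assume a: "psi_iter \<psi> (Suc m) x = psi_iter \<psi> (Suc m) y"
    have "psi_iter \<psi> m x ks ls = psi_iter \<psi> m y ks ls" for ks ls
    proof -
      have "\<psi> (psi_iter \<psi> m x ks ls) = \<psi> (psi_iter \<psi> m y ks ls)"
      proof (intro ext)
        fix k l
        have "psi_iter \<psi> (Suc m) x (ks @ [k]) (ls @ [l]) = psi_iter \<psi> (Suc m) y (ks @ [k]) (ls @ [l])"
          using a by simp
        then show "\<psi> (psi_iter \<psi> m x ks ls) k l = \<psi> (psi_iter \<psi> m y ks ls) k l" by simp
      qed
      then show ?thesis using iso unfolding star_iso_Mn_def by (auto dest: injD)
    qed
    then have "psi_iter \<psi> m x = psi_iter \<psi> m y" by blast
    then show "x = y" using Suc.IH by (auto dest: injD)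
  qed
qed

lemma psi_iter_mult:
  assumes iso: "star_iso_Mn n \<psi>"
  shows "psi_iter \<psi> m (x * y) ks ls = (\<Sum>ps\<in>Lst n m. psi_iter \<psi> m x ks ps * psi_iter \<psi> m y ps ls)"
proof (induction m arbitrary: ks ls)
  case 0 then show ?case by (simp add: Lst_0)
next
  case (Suc m)
  show ?case
  proof (cases "ks = [] \<or> ls = []")
    case True then show ?thesis by auto
  next
    case False
    then obtain ks0 k ls0 l where e: "ks = ks0 @ [k]" "ls = ls0 @ [l]" by (metis rev_exhaust)
    have "psi_iter \<psi> (Suc m) (x * y) ks ls
        = \<psi> (\<Sum>ps\<in>Lst n m. psi_iter \<psi> m x ks0 ps * psi_iter \<psi> m y ps ls0) k l"
      using e Suc.IH by simp
    also have "\<dots> = (\<Sum>ps\<in>Lst n m. \<Sum>q\<in>{1..n}. \<psi> (psi_iter \<psi> m x ks0 ps) k q * \<psi> (psi_iter \<psi> m y ps ls0) q l)"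
      by (simp add: iso_sum[OF iso] iso_mult[OF iso])
    also have "\<dots> = (\<Sum>ps\<in>Lst n (Suc m). psi_iter \<psi> (Suc m) x ks ps * psi_iter \<psi> (Suc m) y ps ls)"
      unfolding sum_Lst_Suc using e by simp
    finally show ?thesis .
  qed
qed

theorem corollary3p3:
  fixes \<psi> :: "'b::cstar_algebra \<Rightarrow> nat \<Rightarrow> nat \<Rightarrow> 'b" and n m :: nat and A :: "'b set"
  assumes "star_iso_Mn n \<psi>"
    and "\<psi> 1 = Mn_unit n"
    and "m \<ge> 1"
    and "masa A"
    and "sigma n \<psi> m ` A \<subseteq> A"
  shows "\<forall>i\<in>{1..n}. \<forall>j\<in>{1..n}. chi \<psi> m i j ` A \<subseteq> A"
proof (intro ballI subsetI)
  note iso = assms(1)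
  obtain p where mp: "m = Suc p" using assms(3) by (cases m) auto
  have ab: "abelian A" using assms(4) by (simp add: masa_def)
  fix i j c assume i: "i \<in> {1..n}" and j: "j \<in> {1..n}" and c: "c \<in> chi \<psi> m i j ` A"
  then obtain a where aA: "a \<in> A" and ca: "c = chi \<psi> m i j a" by auto
  define X where "X = psi_iter \<psi> m a"
  define S where "S = slice i j X"
  have SC: "S \<in> Car n p"
  proof -
    have "X \<in> Car n m" unfolding X_def by (rule psi_iter_car[OF iso])
    then show ?thesis unfolding S_def slice_def Car_def using mp snoc_Lst by auto
  qed
  have Pc: "psi_iter \<psi> p c = S"
  proof -
    have "S \<in> range (psi_iter \<psi> p)" using psi_iter_surj[OF iso SC] by auto
    then show ?thesis unfolding ca chi_def mp S_def X_def
      by (simp add: f_the_inv_into_f[OF psi_iter_inj[OF iso]])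
  qed
  have "c * a' = a' * c" if a'A: "a' \<in> A" for a'
  proof -
    define Y where "Y = psi_iter \<psi> p a'"
    define s where "s = sigma n \<psi> m a'"
    have sA: "s \<in> A" using assms(5) a'A s_def by auto
    have YC: "Y \<in> Car n p" unfolding Y_def by (rule psi_iter_car[OF iso])
    have AC: "ampl n Y \<in> Car n m"
      unfolding Car_def
    proof (intro CollectI allI impI)
      fix ks ls assume nl: "ks \<notin> Lst n m \<or> ls \<notin> Lst n m"
      show "ampl n Y ks ls = 0"
      proof (cases "ks = [] \<or> ls = []")
        case True then show ?thesis by (auto simp: ampl_def)
      next
        case False
        then obtain ks0 k ls0 l where e: "ks = ks0 @ [k]" "ls = ls0 @ [l]" by (metis rev_exhaust)
        show ?thesis using nl e YC mp snoc_Lst by (auto simp: ampl_def Car_def)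
      qed
    qed
    have Ps: "psi_iter \<psi> m s = ampl n Y"
    proof -
      have "ampl n Y \<in> range (psi_iter \<psi> m)" using psi_iter_surj[OF iso AC] by (metis rangeI)
      then show ?thesis unfolding s_def sigma_def Y_def mp
        by (simp add: f_the_inv_into_f[OF psi_iter_inj[OF iso]])
    qed
    have comm: "s * a = a * s" using ab sA aA by (simp add: abelian_def)
    have "psi_iter \<psi> p (c * a') us vs = psi_iter \<psi> p (a' * c) us vs" for us vs
    proof -
      have e1: "psi_iter \<psi> m (s * a) (us @ [i]) (vs @ [j]) = (\<Sum>qs\<in>Lst n p. Y us qs * S qs vs)"
      proof -
        have "psi_iter \<psi> m (s * a) (us @ [i]) (vs @ [j])
            = (\<Sum>qs\<in>Lst n p. \<Sum>q\<in>{1..n}. ampl n Y (us @ [i]) (qs @ [q]) * X (qs @ [q]) (vs @ [j]))"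
          unfolding psi_iter_mult[OF iso] Ps X_def unfolding mp sum_Lst_Suc ..
        also have "\<dots> = (\<Sum>qs\<in>Lst n p. \<Sum>q\<in>{1..n}. (if q = i then Y us qs * X (qs @ [q]) (vs @ [j]) else 0))"
          using i by (intro sum.cong refl) (auto simp: ampl_def)
        also have "\<dots> = (\<Sum>qs\<in>Lst n p. Y us qs * S qs vs)"
          using i by (simp add: S_def slice_def)
        finally show ?thesis .
      qed
      have e2: "psi_iter \<psi> m (a * s) (us @ [i]) (vs @ [j]) = (\<Sum>qs\<in>Lst n p. S us qs * Y qs vs)"
      proof -
        have "psi_iter \<psi> m (a * s) (us @ [i]) (vs @ [j])
            = (\<Sum>qs\<in>Lst n p. \<Sum>q\<in>{1..n}. X (us @ [i]) (qs @ [q]) * ampl n Y (qs @ [q]) (vs @ [j]))"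
          unfolding psi_iter_mult[OF iso] Ps X_def unfolding mp sum_Lst_Suc ..
        also have "\<dots> = (\<Sum>qs\<in>Lst n p. \<Sum>q\<in>{1..n}. (if q = j then X (us @ [i]) (qs @ [q]) * Y qs vs else 0))"
          using j by (intro sum.cong refl) (auto simp: ampl_def)
        also have "\<dots> = (\<Sum>qs\<in>Lst n p. S us qs * Y qs vs)"
          using j by (simp add: S_def slice_def)
        finally show ?thesis .
      qed
      have "psi_iter \<psi> p (c * a') us vs = (\<Sum>qs\<in>Lst n p. S us qs * Y qs vs)"
        unfolding psi_iter_mult[OF iso] Pc Y_def ..
      also have "\<dots> = (\<Sum>qs\<in>Lst n p. Y us qs * S qs vs)" using e1 e2 comm by simp
      also have "\<dots> = psi_iter \<psi> p (a' * c) us vs"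
        unfolding psi_iter_mult[OF iso] Pc Y_def ..
      finally show ?thesis .
    qed
    then have "psi_iter \<psi> p (c * a') = psi_iter \<psi> p (a' * c)" by blast
    then show ?thesis using psi_iter_inj[OF iso] by (auto dest: injD)
  qed
  then show "c \<in> A" using masa_commutant[OF assms(4)] by blast
qed

end
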